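(* Let $R$ be a commutative ring that is $\aleph_0$-self-injective. Then for any two countably generated ideals $I_1,I_2$ of $R$, $\mathrm{Ann}(I_1\cap I_2)=\mathrm{Ann}(I_1)+\mathrm{Ann}(I_2)$; that is, $R$ is an $\aleph_0$-IK ring.
   Context: $R$ is $\aleph_0$-self-injective if every $R$-homomorphism from a countably generated ideal $I$ of $R$ into $R$ extends to an $R$-homomorphism $R\to R$. For a subset $X$ of a commutative ring $R$, $\mathrm{Ann}(X)=\{r\in R: rx=0 \text{ for all } x\in X\}$. *)

theory Defs
  imports Main "HOL-Library.Countable_Set"
begin

definition is_ideal :: "'a::comm_ring_1 set \<Rightarrow> bool" where
  "is_ideal I \<longleftrightarrow> 0 \<in> I \<and> (\<forall>x\<in>I. \<forall>y\<in>I. x + y \<in> I) \<and> (\<forall>r x. x \<in> I \<longrightarrow> r * x \<in> I)"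

definition ideal_gen :: "'a::comm_ring_1 set \<Rightarrow> 'a set" where
  "ideal_gen S = \<Inter>{J. is_ideal J \<and> S \<subseteq> J}"

definition countably_generated_ideal :: "'a::comm_ring_1 set \<Rightarrow> bool" where
  "countably_generated_ideal I \<longleftrightarrow> (\<exists>S. countable S \<and> I = ideal_gen S)"

definition R_hom_on :: "'a::comm_ring_1 set \<Rightarrow> ('a \<Rightarrow> 'a) \<Rightarrow> bool" where
  "R_hom_on I f \<longleftrightarrow> (\<forall>x\<in>I. \<forall>y\<in>I. f (x + y) = f x + f y) \<and> (\<forall>r. \<forall>x\<in>I. f (r * x) = r * f x)"

definition aleph0_self_injective :: "'a::comm_ring_1 itself \<Rightarrow> bool" where
  "aleph0_self_injective _ \<longleftrightarrow>
     (\<forall>(I::'a set) f. is_ideal I \<and> countably_generated_ideal I \<and> R_hom_on I f \<longrightarrow>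
        (\<exists>g. R_hom_on UNIV g \<and> (\<forall>x\<in>I. g x = f x)))"

definition Ann :: "'a::comm_ring_1 set \<Rightarrow> 'a set" where
  "Ann X = {r. \<forall>x\<in>X. r * x = 0}"

definition ideal_sum :: "'a::comm_ring_1 set \<Rightarrow> 'a set \<Rightarrow> 'a set" where
  "ideal_sum A B = {a + b | a b. a \<in> A \<and> b \<in> B}"

end

theory Submission
  imports Defs "HOL-Library.Countable_Set"
begin
lemma ideal_diff: "is_ideal I \<Longrightarrow> a \<in> I \<Longrightarrow> b \<in> I \<Longrightarrow> a - b \<in> I"
  unfolding is_ideal_def
  by (metis diff_conv_add_uminus mult_minus1)
lemma ideal_gen_ideal: "is_ideal (ideal_gen S)"
  unfolding ideal_gen_def is_ideal_def by auto
lemma ideal_gen_sup: "S \<subseteq> ideal_gen S"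
  unfolding ideal_gen_def by auto
lemma ideal_gen_least: "is_ideal J \<Longrightarrow> S \<subseteq> J \<Longrightarrow> ideal_gen S \<subseteq> J"
  unfolding ideal_gen_def by auto
lemma i0: "is_ideal I \<Longrightarrow> 0 \<in> I" unfolding is_ideal_def by blast
lemma iadd: "is_ideal I \<Longrightarrow> x \<in> I \<Longrightarrow> y \<in> I \<Longrightarrow> x + y \<in> I" unfolding is_ideal_def by blast
lemma imul: "is_ideal I \<Longrightarrow> x \<in> I \<Longrightarrow> r * x \<in> I" unfolding is_ideal_def by blast
lemma isumI: "a \<in> A \<Longrightarrow> b \<in> B \<Longrightarrow> x = a + b \<Longrightarrow> x \<in> ideal_sum A B"
  unfolding ideal_sum_def by blast
lemma isumE: "x \<in> ideal_sum A B \<Longrightarrow> (\<And>a b. a \<in> A \<Longrightarrow> b \<in> B \<Longrightarrow> x = a + b \<Longrightarrow> P) \<Longrightarrow> P"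
  unfolding ideal_sum_def by blast
lemma sum_ideal: "is_ideal A \<Longrightarrow> is_ideal B \<Longrightarrow> is_ideal (ideal_sum A B)"
proof -
  assume A: "is_ideal A" and B: "is_ideal B"
  show ?thesis unfolding is_ideal_def
  proof (intro conjI allI impI ballI)
    show "0 \<in> ideal_sum A B" by (rule isumI[OF i0[OF A] i0[OF B]]) simp
  next
    fix x y assume "x \<in> ideal_sum A B" "y \<in> ideal_sum A B"
    then obtain a b c d where h: "a \<in> A" "b \<in> B" "c \<in> A" "d \<in> B" "x = a + b" "y = c + d" by (metis isumE)
    show "x + y \<in> ideal_sum A B"
      by (rule isumI[OF iadd[OF A h(1,3)] iadd[OF B h(2,4)]]) (simp add: h algebra_simps)
  next
    fix r x assume "x \<in> ideal_sum A B"
    then obtain a b where h: "a \<in> A" "b \<in> B" "x = a + b" by (metis isumE)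
    show "r * x \<in> ideal_sum A B"
      by (rule isumI[OF imul[OF A h(1)] imul[OF B h(2)]]) (simp add: h algebra_simps)
  qed
qed
lemma sum_cg:
  assumes "countably_generated_ideal A" "countably_generated_ideal B"
  shows "countably_generated_ideal (ideal_sum A B)"
proof -
  obtain S1 where S1: "countable S1" "A = ideal_gen S1" using assms(1) countably_generated_ideal_def by blast
  obtain S2 where S2: "countable S2" "B = ideal_gen S2" using assms(2) countably_generated_ideal_def by blast
  have iA: "is_ideal A" and iB: "is_ideal B" using S1 S2 ideal_gen_ideal by auto
  have "ideal_sum A B = ideal_gen (S1 \<union> S2)"
  proof
    have "S1 \<union> S2 \<subseteq> ideal_sum A B"
    proof
      fix x assume "x \<in> S1 \<union> S2"
      then show "x \<in> ideal_sum A B"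
      proof
        assume "x \<in> S1" then have "x \<in> A" using S1 ideal_gen_sup by blast
        then show ?thesis by (rule isumI[OF _ i0[OF iB]]) simp
      next
        assume "x \<in> S2" then have "x \<in> B" using S2 ideal_gen_sup by blast
        then show ?thesis by (rule isumI[OF i0[OF iA]]) simp
      qed
    qed
    then show "ideal_gen (S1 \<union> S2) \<subseteq> ideal_sum A B"
      by (rule ideal_gen_least[OF sum_ideal[OF iA iB]])
  next
    have G: "is_ideal (ideal_gen (S1 \<union> S2))" by (rule ideal_gen_ideal)
    have sA: "A \<subseteq> ideal_gen (S1 \<union> S2)" unfolding S1(2)
      by (rule ideal_gen_least[OF G]) (use ideal_gen_sup in blast)
    have sB: "B \<subseteq> ideal_gen (S1 \<union> S2)" unfolding S2(2)
      by (rule ideal_gen_least[OF G]) (use ideal_gen_sup in blast)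
    show "ideal_sum A B \<subseteq> ideal_gen (S1 \<union> S2)"
    proof
      fix x assume "x \<in> ideal_sum A B"
      then obtain a b where h: "a \<in> A" "b \<in> B" "x = a + b" by (metis isumE)
      show "x \<in> ideal_gen (S1 \<union> S2)" unfolding h(3) using iadd[OF G] sA sB h by blast
    qed
  qed
  then show ?thesis using S1 S2 countably_generated_ideal_def by (metis countable_Un)
qed

theorem lemma2p2:
  assumes "aleph0_self_injective TYPE('a::comm_ring_1)"
    and "is_ideal (I1::'a set)" and "countably_generated_ideal I1"
    and "is_ideal (I2::'a set)" and "countably_generated_ideal I2"
  shows "Ann (I1 \<inter> I2) = ideal_sum (Ann I1) (Ann I2)"
proof
  show "ideal_sum (Ann I1) (Ann I2) \<subseteq> Ann (I1 \<inter> I2)"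
  proof
    fix x assume "x \<in> ideal_sum (Ann I1) (Ann I2)"
    then obtain a b where h: "a \<in> Ann I1" "b \<in> Ann I2" "x = a + b" by (metis isumE)
    then show "x \<in> Ann (I1 \<inter> I2)" unfolding Ann_def by (simp add: distrib_right)
  qed
next
  show "Ann (I1 \<inter> I2) \<subseteq> ideal_sum (Ann I1) (Ann I2)"
  proof
    fix r assume r: "r \<in> Ann (I1 \<inter> I2)"
    define f where "f x = r * (SOME x1. x1 \<in> I1 \<and> x - x1 \<in> I2)" for x
    have key: "f x = r * x1" if "x1 \<in> I1" "x - x1 \<in> I2" for x x1
    proof -
      let ?y = "SOME x1. x1 \<in> I1 \<and> x - x1 \<in> I2"
      have y: "?y \<in> I1 \<and> x - ?y \<in> I2" by (rule someI[of _ x1]) (use that in auto)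
      have m1: "x1 - ?y \<in> I1" using ideal_diff[OF assms(2)] y that by blast
      have e: "x1 - ?y = (x - ?y) - (x - x1)" by simp
      have m2: "x1 - ?y \<in> I2" unfolding e using ideal_diff[OF assms(4)] y that by blast
      have "r * (x1 - ?y) = 0" using r m1 m2 unfolding Ann_def by blast
      then show ?thesis unfolding f_def by (simp add: right_diff_distrib)
    qed
    let ?J = "ideal_sum I1 I2"
    have hom: "R_hom_on ?J f"
      unfolding R_hom_on_def
    proof (intro conjI ballI allI)
      fix x y assume "x \<in> ?J" "y \<in> ?J"
      then obtain a b c d where abcd: "a \<in> I1" "b \<in> I2" "x = a + b" "c \<in> I1" "d \<in> I2" "y = c + d"
        by (metis isumE)
      have "f (x + y) = r * (a + c)" 
        by (rule key[OF iadd[OF assms(2) abcd(1,4)]]) (simp add: abcd iadd[OF assms(4) abcd(2,5)] algebra_simps)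
      moreover have "f x = r * a" by (rule key) (simp_all add: abcd)
      moreover have "f y = r * c" by (rule key) (simp_all add: abcd)
      ultimately show "f (x + y) = f x + f y" by (simp add: distrib_left)
    next
      fix s x assume "x \<in> ?J"
      then obtain a b where ab: "a \<in> I1" "b \<in> I2" "x = a + b" by (metis isumE)
      have "f (s * x) = r * (s * a)"
        by (rule key[OF imul[OF assms(2) ab(1)]]) (simp add: ab imul[OF assms(4) ab(2)] distrib_left)
      moreover have "f x = r * a" by (rule key) (simp_all add: ab)
      ultimately show "f (s * x) = s * f x" by (simp add: mult.left_commute)
    qed
    have "is_ideal ?J" using sum_ideal assms(2,4) by blast
    moreover have "countably_generated_ideal ?J" using sum_cg assms(3,5) by blast
    ultimately obtain g where g: "R_hom_on UNIV g" "\<forall>x\<in>?J. g x = f x"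
      using assms(1) hom unfolding aleph0_self_injective_def by blast
    define c where "c = g 1"
    have gl: "g x = x * c" for x
    proof -
      have "g (x * 1) = x * g 1" using g(1) unfolding R_hom_on_def by blast
      then show ?thesis by (simp add: c_def)
    qed
    have z1: "0 \<in> I1" and z2: "0 \<in> I2" using i0 assms(2,4) by blast+
    have "r - c \<in> Ann I1"
      unfolding Ann_def
    proof (intro CollectI ballI)
      fix x assume x: "x \<in> I1"
      have "x \<in> ?J" by (rule isumI[OF x z2]) simp
      then have "g x = f x" using g by blast
      moreover have "f x = r * x" by (rule key[OF x]) (simp add: z2)
      ultimately show "(r - c) * x = 0" using gl[of x] by (simp add: algebra_simps)
    qed
    moreover have "c \<in> Ann I2"
      unfolding Ann_def
    proof (intro CollectI ballI)
      fix x assume x: "x \<in> I2"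
      have "x \<in> ?J" by (rule isumI[OF z1 x]) simp
      then have "g x = f x" using g by blast
      moreover have "f x = r * 0" by (rule key[OF z1]) (simp add: x)
      ultimately show "c * x = 0" using gl[of x] by (simp add: algebra_simps)
    qed
    ultimately show "r \<in> ideal_sum (Ann I1) (Ann I2)"
      by (rule isumI) simp
  qed
qed
end
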